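(* Let $k\ge 2$ be a non-square integer, let $0=t_0<t_1<t_2<\cdots$ be the increasing enumeration of all nonnegative integers $t$ such that $kT_t$ is triangular, and let $r$ be the rank and $\kappa=t_{r-1}+t_r$ as in Theorem 1 (so that $t_n=2(\kappa+1)t_{n-r}-t_{n-2r}+\kappa$ for all $n\ge 2r$). Then for every integer $n\ge r$, $$\kappa\left(t_n+2t_nt_{n-r}+t_{n-r}\right)-\left(t_n-t_{n-r}\right)^2=t_rt_{r-1}.$$
   Context: $T_m=\frac{m(m+1)}{2}$ denotes the $m$-th triangular number; an integer is triangular if it equals $T_m$ for some integer $m\ge0$. Theorem 1 (referenced): for non-square $k\ge2$ there is a positive integer $r$ such that with $\kappa=t_{r-1}+t_r$ one has $\kappa=\xi_r-\xi_{r-1}-1$ (where $\xi_n\ge0$ satisfies $T_{\xi_n}=kT_{t_n}$), $(t_{2r}-t_{r-1})/t_r=2\kappa+3$, and $t_n=2(\kappa+1)t_{n-r}-t_{n-2r}+\kappa$ for all $n\ge 2r$. *)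

theory Defs
  imports Complex_Main "HOL-Library.Infinite_Set"
begin

definition Tri :: "nat \<Rightarrow> nat" where
  "Tri m = m * (m + 1) div 2"

definition triangular :: "nat \<Rightarrow> bool" where
  "triangular x \<longleftrightarrow> (\<exists>m. x = Tri m)"

definition tset :: "nat \<Rightarrow> nat set" where
  "tset k = {t. triangular (k * Tri t)}"

definition tseq :: "nat \<Rightarrow> nat \<Rightarrow> nat" where
  "tseq k n = enumerate (tset k) n"

text \<open>xi_n >= 0 with T_{xi_n} = k T_{t_n} (unique, as Tri is strictly increasing).\<close>
definition xi :: "nat \<Rightarrow> nat \<Rightarrow> nat" where
  "xi k n = (THE x. Tri x = k * Tri (tseq k n))"

end

theory Submission imports Defs begin
lemma Tri8: "8 * Tri m + 1 = (2*m+1)^2"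
proof -
  have "even (m*(m+1))" by simp
  then have "2 * Tri m = m*(m+1)" unfolding Tri_def by simp
  then show ?thesis by (simp add: power2_eq_square algebra_simps)
qed
lemma Tri_inj: "Tri a = Tri b \<Longrightarrow> a = b"
proof -
  assume "Tri a = Tri b"
  then have "(2*a+1)^2 = (2*b+1)^2" using Tri8[of a] Tri8[of b] by simp
  then show "a = b" by (simp add: power2_eq_iff_nonneg)
qed

lemma TriI: "8 * int (Tri m) + 1 = (2*int m+1)^2"
proof -
  have "int (8 * Tri m + 1) = int ((2*m+1)^2)" using Tri8[of m] by (rule arg_cong)
  then show ?thesis by (simp only: of_nat_add of_nat_mult of_nat_power of_nat_numeral of_nat_1)
qed

lemma mem_iff: "t \<in> tset k \<longleftrightarrow> (\<exists>X::int. X \<ge> 0 \<and> X^2 = int k * (2*int t+1)^2 + 1 - int k)"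
proof
  assume "t \<in> tset k"
  then obtain m where m: "k * Tri t = Tri m" unfolding tset_def triangular_def by auto
  have "(2*int m+1)^2 = 8 * int (Tri m) + 1" using TriI[of m] by (rule sym)
  also have "\<dots> = int k * (8 * int (Tri t)) + 1" using arg_cong[OF m, of int] by simp
  also have "\<dots> = int k * (2*int t+1)^2 + 1 - int k" unfolding TriI[of t, symmetric] by (simp add: algebra_simps)
  finally show "\<exists>X::int. X \<ge> 0 \<and> X^2 = int k * (2*int t+1)^2 + 1 - int k"
    by (intro exI[of _ "2*int m+1"]) simp
next
  assume "\<exists>X::int. X \<ge> 0 \<and> X^2 = int k * (2*int t+1)^2 + 1 - int k"
  then obtain X :: int where X: "X \<ge> 0" "X^2 = int k * (2*int t+1)^2 + 1 - int k" by auto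
  have "X^2 = 2 * (2 * int k * int t * (int t + 1)) + 1" unfolding X(2) by (simp add: algebra_simps power2_eq_square)
  then have "odd (X^2)" by simp
  then have "odd X" by simp
  then obtain m :: int where m: "X = 2*m+1" by (metis oddE)
  with X have m0: "m \<ge> 0" by simp
  have "8 * int (Tri (nat m)) + 1 = X^2" using TriI[of "nat m"] m m0 by simp
  also have "\<dots> = int k * (8 * int (Tri t)) + 1" using X(2) unfolding TriI[of t, symmetric]
    by (simp add: algebra_simps)
  finally have "int (Tri (nat m)) = int (k * Tri t)" by simp
  then have "Tri (nat m) = k * Tri t" by (simp only: of_nat_eq_iff)
  then have "k * Tri t = Tri (nat m)" by (rule sym)
  then have "triangular (k * Tri t)" unfolding triangular_def by (rule exI)
  then show "t \<in> tset k" unfolding tset_def by simp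
qed

lemma xi_prop: assumes "tseq k n \<in> tset k" shows "Tri (xi k n) = k * Tri (tseq k n)"
proof -
  obtain m where m: "k * Tri (tseq k n) = Tri m" using assms unfolding tset_def triangular_def by auto
  have "Tri (THE x. Tri x = k * Tri (tseq k n)) = k * Tri (tseq k n)"
    by (rule theI[of _ m]) (use m Tri_inj in auto)
  then show ?thesis unfolding xi_def .
qed

lemma xi_X: assumes "tseq k n \<in> tset k"
  shows "(2*int (xi k n)+1)^2 = int k * (2*int (tseq k n)+1)^2 + 1 - int k"
proof -
  have "(2*int (xi k n)+1)^2 = 8 * int (Tri (xi k n)) + 1" using TriI by (rule sym)
  also have "\<dots> = int k * (8 * int (Tri (tseq k n))) + 1" using arg_cong[OF xi_prop[OF assms], of int] by simp
  also have "\<dots> = int k * (2*int (tseq k n)+1)^2 + 1 - int k" unfolding TriI[symmetric] by (simp add: algebra_simps)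
  finally show ?thesis .
qed

lemma enum_empty: "finite S \<Longrightarrow> card S \<le> n \<Longrightarrow> enumerate S n = enumerate ({}::nat set) 0"
proof (induction n arbitrary: S)
  case 0 then show ?case by simp
next
  case (Suc n)
  show ?case
  proof (cases "S = {}")
    case True
    then show ?thesis using Suc.IH[of "{}"] by (simp add: enumerate_Suc)
  next
    case False
    then have "(LEAST n. n \<in> S) \<in> S" by (meson LeastI ex_in_conv)
    then have "card (S - {LEAST n. n \<in> S}) \<le> n" using Suc.prems by (simp add: card_Diff_singleton)
    then show ?thesis using Suc.IH[of "S - {LEAST n. n \<in> S}"] Suc.prems by (simp add: enumerate_Suc)
  qed
qed

lemma norm_id: "((P::int)*X + c*k*q*U)^2 - k*(P*U + c*q*X)^2 = (P^2 - k*(c*q)^2)*(X^2 - k*U^2)"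
  by (simp add: power2_eq_square algebra_simps)

lemma root_mono:
  fixes k U1 U2 X1 X2 :: int
  assumes "k \<ge> 0" "X1 \<ge> 0" "X2 \<ge> 0" "X1^2 = k*U1^2+1-k" "X2^2 = k*U2^2+1-k" "0 \<le> U1" "U1 \<le> U2"
  shows "X1 \<le> X2"
proof -
  have "U1^2 \<le> U2^2" using assms by (simp add: power_mono)
  then have "k*U1^2 \<le> k*U2^2" using assms(1) by (simp add: mult_left_mono)
  then have "X1^2 \<le> X2^2" using assms by simp
  then show ?thesis using assms(3) by (rule power2_le_imp_le)
qed

lemma psi_mono:
  fixes k P q U1 U2 X1 X2 :: int
  assumes "k \<ge> 0" "P \<ge> 1" "q \<ge> 0" "X1 \<ge> 0" "X2 \<ge> 0" "X1^2 = k*U1^2+1-k" "X2^2 = k*U2^2+1-k" "0 \<le> U1" "U1 \<le> U2"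
  shows "P*U1 + q*X1 \<le> P*U2 + q*X2" and "U1 < U2 \<Longrightarrow> P*U1 + q*X1 < P*U2 + q*X2"
proof -
  have x: "X1 \<le> X2" using root_mono[of k X1 X2 U1 U2] assms by simp
  then have "q*X1 \<le> q*X2" using assms(3) by (simp add: mult_left_mono)
  moreover have "P*U1 \<le> P*U2" using assms by (simp add: mult_left_mono)
  ultimately show "P*U1 + q*X1 \<le> P*U2 + q*X2" by simp
  assume "U1 < U2"
  then have "P*U1 < P*U2" using assms by simp
  with \<open>q*X1 \<le> q*X2\<close> show "P*U1 + q*X1 < P*U2 + q*X2" by simp
qed

lemma psi_inv:
  fixes k P q U X :: int
  assumes k: "k \<ge> 2" and P: "P \<ge> 1" and q: "q \<ge> 0" and H: "k*q^2 = P^2 - 1"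
    and X: "X \<ge> 0" "X^2 = k*U^2+1-k" and U: "U \<ge> P + q"
  shows "P*U - q*X > 0" "P*X - k*q*U \<ge> 0" "P*(P*U - q*X) + q*(P*X - k*q*U) = U"
    "(P*X - k*q*U)^2 = k*(P*U - q*X)^2 + 1 - k"
proof -
  have "(P*X + (-1)*k*q*U)^2 - k*(P*U + (-1)*q*X)^2 = (P^2 - k*((-1)*q)^2)*(X^2 - k*U^2)"
    by (rule norm_id)
  then have "(P*X - k*q*U)^2 - k*(P*U - q*X)^2 = X^2 - k*U^2" using H by (simp add: power2_eq_square)
  then show "(P*X - k*q*U)^2 = k*(P*U - q*X)^2 + 1 - k" using X by simp
  have "P*(P*U - q*X) + q*(P*X - k*q*U) = (P^2 - k*q^2)*U" by (simp add: power2_eq_square algebra_simps)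
  then show "P*(P*U - q*X) + q*(P*X - k*q*U) = U" using H by simp
  have U1: "U \<ge> 1" using U P q by simp
  have HP: "P^2 = k*q^2+1" using H by simp
  have "(q*X)^2 = q^2*(k*U^2+1-k)" using X by (simp add: power_mult_distrib)
  also have "\<dots> = (k*q^2)*U^2 - q^2*(k-1)" by (simp add: algebra_simps)
  also have "\<dots> = P^2*U^2 - U^2 - q^2*(k-1)" unfolding HP by (simp add: algebra_simps)
  also have "\<dots> < (P*U)^2"
  proof -
    have "U^2 > 0" using U1 by simp
    moreover have "q^2*(k-1) \<ge> 0" using k by simp
    moreover have "(P*U)^2 = P^2*U^2" by (simp add: power_mult_distrib)
    ultimately show ?thesis by linarith
  qed
  finally have "(q*X)^2 < (P*U)^2" .
  have "0 \<le> P*U" using P U1 by simp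
  have "q*X < P*U" by (rule power2_less_imp_less) fact+
  then show "P*U - q*X > 0" by simp
  have "(k*q*U)^2 = k*(k*q^2)*U^2" by (simp add: power_mult_distrib power2_eq_square)
  also have "\<dots> = k*P^2*U^2 - k*U^2" unfolding HP by (simp add: algebra_simps)
  also have "\<dots> \<le> k*P^2*U^2 - P^2*(k-1)"
  proof -
    have "P^2 \<le> U^2" using U P q by (intro power_mono) simp_all
    then have "k*P^2 \<le> k*U^2" using k by simp
    moreover have "P^2*(k-1) \<le> k*P^2" by (simp add: algebra_simps)
    ultimately show ?thesis by linarith
  qed
  also have "\<dots> = (P*X)^2" unfolding power_mult_distrib X(2) by (simp add: algebra_simps)
  finally have "(k*q*U)^2 \<le> (P*X)^2" .
  have "0 \<le> P*X" using P X by simp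
  have "k*q*U \<le> P*X" by (rule power2_le_imp_le) fact+
  then show "P*X - k*q*U \<ge> 0" by simp
qed

lemma root_odd:
  fixes X :: int assumes "X^2 = int k * (2*int t+1)^2 + 1 - int k" "X \<ge> 0"
  shows "\<exists>y. y \<ge> 0 \<and> X = 2*y+1"
proof -
  have "X^2 = 2 * (2 * int k * int t * (int t + 1)) + 1" unfolding assms(1) by (simp add: algebra_simps power2_eq_square)
  then have "odd (X^2)" by simp
  then have "odd X" by simp
  then obtain m :: int where m: "X = 2*m+1" by (metis oddE)
  with assms have "m \<ge> 0" by simp
  with m show ?thesis by blast
qed

lemma tnext_gen: assumes "infinite S" "s \<in> S" "enumerate S n < (s::nat)"
  shows "enumerate S (Suc n) \<le> s"
proof -
  obtain m where m: "enumerate S m = s" using enumerate_Ex[OF assms(1,2)] by blast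
  then have "n < m" using assms enumerate_mono_iff[OF assms(1), of n m] by simp
  then have "Suc n \<le> m" by simp
  then show ?thesis using m enumerate_mono_le_iff[OF assms(1), of "Suc n" m] by simp
qed

lemma finite_case:
  fixes k r :: nat and \<kappa> :: int
  assumes r_pos: "r \<ge> 1"
    and kappa_def: "\<kappa> = int (tseq k (r - 1)) + int (tseq k r)"
    and ratio: "(real (tseq k (2 * r)) - real (tseq k (r - 1))) / real (tseq k r) = 2 * real_of_int \<kappa> + 3"
    and recur: "\<forall>n \<ge> 2 * r. int (tseq k n) = 2 * (\<kappa> + 1) * int (tseq k (n - r)) - int (tseq k (n - 2 * r)) + \<kappa>"
  shows "infinite (tset k)"
proof
  assume fin: "finite (tset k)"
  define c where "c = card (tset k)"
  define L where "L = enumerate ({}::nat set) 0"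
  have tL: "tseq k n = L" if "n \<ge> c" for n
    unfolding tseq_def L_def by (rule enum_empty[OF fin]) (use that c_def in simp)
  define n where "n = c + 2*r"
  have "int (tseq k n) = 2 * (\<kappa> + 1) * int (tseq k (n - r)) - int (tseq k (n - 2 * r)) + \<kappa>"
    using recur n_def by simp
  moreover have "tseq k n = L" "tseq k (n-r) = L" "tseq k (n - 2*r) = L" using tL n_def by auto
  ultimately have "int L = 2 * (\<kappa> + 1) * int L - int L + \<kappa>" by simp
  then have "\<kappa> * (2 * int L + 1) = 0" by (simp add: algebra_simps)
  then have "\<kappa> = 0" by simp
  then have "tseq k r = 0" using kappa_def by simp
  then show False using ratio \<open>\<kappa> = 0\<close> by simp
qed

theorem lemma2:
  fixes k r :: nat and \<kappa> :: int
  assumes k2: "k \<ge> 2"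
    and nonsq: "\<not> (\<exists>m. k = m ^ 2)"
    and r_pos: "r \<ge> 1"
    and kappa_def: "\<kappa> = int (tseq k (r - 1)) + int (tseq k r)"
    and kappa_xi: "\<kappa> = int (xi k r) - int (xi k (r - 1)) - 1"
    and ratio: "(real (tseq k (2 * r)) - real (tseq k (r - 1))) / real (tseq k r) = 2 * real_of_int \<kappa> + 3"
    and recur: "\<forall>n \<ge> 2 * r. int (tseq k n) = 2 * (\<kappa> + 1) * int (tseq k (n - r)) - int (tseq k (n - 2 * r)) + \<kappa>"
  shows "\<forall>n \<ge> r. \<kappa> * (int (tseq k n) + 2 * int (tseq k n) * int (tseq k (n - r)) + int (tseq k (n - r)))
                  - (int (tseq k n) - int (tseq k (n - r)))^2 = int (tseq k r) * int (tseq k (r - 1))"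
proof -
  have inf: "infinite (tset k)" by (rule finite_case[OF r_pos kappa_def ratio recur])
  have tin: "tseq k n \<in> tset k" for n unfolding tseq_def by (rule enumerate_in_set[OF inf])
  have tlt: "tseq k m < tseq k n \<longleftrightarrow> m < n" for m n unfolding tseq_def using inf by simp
  have tle: "tseq k m \<le> tseq k n \<longleftrightarrow> m \<le> n" for m n unfolding tseq_def using inf by simp
  have tnext: "tseq k (Suc n) \<le> s" if "s \<in> tset k" "tseq k n < s" for n s
    using tnext_gen[OF inf that[unfolded tseq_def]] unfolding tseq_def .
  have z: "0 \<in> tset k" unfolding tset_def triangular_def Tri_def by (auto intro: exI[of _ 0])
  have t0: "tseq k 0 = 0" unfolding tseq_def enumerate_0 using z by simp
  define K where "K = int k"
  have K2: "K \<ge> 2" using k2 K_def by simp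
  define U where "U n = 2 * int (tseq k n) + 1" for n
  have roots: "\<exists>X. X \<ge> 0 \<and> X^2 = K * (U n)^2 + 1 - K" for n
    using tin[of n] unfolding mem_iff U_def K_def .
  define a where "a = int (tseq k (r-1))"
  define b where "b = int (tseq k r)"
  define P where "P = \<kappa> + 1"
  define q where "q = b - a"
  have ab: "a < b" unfolding a_def b_def using tlt[of "r-1" r] r_pos by simp
  have kab: "\<kappa> = a + b" using kappa_def a_def b_def by simp
  have a0: "a \<ge> 0" unfolding a_def by simp
  have P1: "P \<ge> 1" using kab ab a0 P_def by simp
  have q0: "q \<ge> 0" using ab q_def by simp
  define Xa where "Xa = 2 * int (xi k (r-1)) + 1"
  define Xb where "Xb = 2 * int (xi k r) + 1"
  have Na: "Xa^2 = K * (2*a+1)^2 + 1 - K" unfolding Xa_def K_def a_def by (rule xi_X[OF tin])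
  have Nb: "Xb^2 = K * (2*b+1)^2 + 1 - K" unfolding Xb_def K_def b_def by (rule xi_X[OF tin])
  have dX: "Xb - Xa = 2*P" using kappa_xi Xa_def Xb_def P_def by simp
  have sU: "(2*b+1) + (2*a+1) = 2*P" using kab P_def by simp
  have "(Xb - Xa)*(Xb + Xa) = K*((2*b+1) - (2*a+1))*((2*b+1)+(2*a+1))"
  proof -
    have "(Xb - Xa)*(Xb + Xa) = Xb^2 - Xa^2" by (simp add: power2_eq_square algebra_simps)
    also have "\<dots> = K*((2*b+1)^2 - (2*a+1)^2)" using Na Nb by (simp add: algebra_simps)
    also have "\<dots> = K*((2*b+1) - (2*a+1))*((2*b+1)+(2*a+1))" by (simp add: power2_eq_square algebra_simps)
    finally show ?thesis .
  qed
  then have "2*P*(Xb + Xa) = 2*P*(2*K*q)" unfolding dX sU q_def by (simp add: algebra_simps)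
  then have "Xb + Xa = 2*K*q" using P1 by simp
  then have XbP: "Xb = K*q + P" using dX by simp
  have UbP: "2*b+1 = P + q" using P_def q_def kab by simp
  have "(K*q + P)^2 = K*(P+q)^2 + 1 - K" using Nb unfolding XbP UbP .
  then have "(K - 1) * (K*q^2 - (P^2 - 1)) = 0" by (simp add: power2_eq_square algebra_simps)
  then have H: "K*q^2 = P^2 - 1" using K2 by simp
  have Ur: "U r = P + q" using UbP U_def b_def by simp
  have U0: "U 0 = 1" using t0 U_def by simp
  have Umono: "U m < U n \<longleftrightarrow> m < n" for m n
  proof -
    have "U m < U n \<longleftrightarrow> tseq k m < tseq k n" unfolding U_def by auto
    then show ?thesis using tlt[of m n] by simp
  qed
  have Umono': "U m \<le> U n \<longleftrightarrow> m \<le> n" for m n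
  proof -
    have "U m \<le> U n \<longleftrightarrow> tseq k m \<le> tseq k n" unfolding U_def by auto
    then show ?thesis using tle[of m n] by simp
  qed
  have Upos: "U n \<ge> 0" for n using U_def by simp
  have fwd: "\<exists>n. U n = P * U m + q * X" if X: "X \<ge> 0" "X^2 = K * (U m)^2 + 1 - K" for m X
  proof -
    obtain y where y: "y \<ge> 0" "X = 2*y+1" using root_odd[of X k "tseq k m"] X unfolding U_def K_def by blast
    define t' where "t' = P * int (tseq k m) + q * y + b"
    have t'0: "t' \<ge> 0" unfolding t'_def using P1 q0 y b_def by simp
    have Ut': "2 * t' + 1 = P * U m + q * X" unfolding t'_def U_def y(2) using UbP by (simp add: algebra_simps)
    have "(P*X + 1*K*q*(U m))^2 - K*(P*(U m) + 1*q*X)^2 = (P^2 - K*(1*q)^2)*(X^2 - K*(U m)^2)"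
      by (rule norm_id)
    then have "(P*X + K*q*(U m))^2 = K*(P*(U m) + q*X)^2 + 1 - K" using H X(2) by simp
    moreover have "P*X + K*q*(U m) \<ge> 0" using P1 q0 X K2 Upos[of m] by simp
    ultimately have "nat t' \<in> tset k" unfolding mem_iff using t'0 Ut' K_def by (metis int_nat_eq)
    then obtain n where "enumerate (tset k) n = nat t'" using enumerate_Ex[OF inf] by blast
    then have "U n = 2 * t' + 1" using t'0 U_def tseq_def by simp
    then show ?thesis using Ut' by auto
  qed
  have main: "\<exists>X. X \<ge> 0 \<and> X^2 = K * (U j)^2 + 1 - K \<and> U (r + j) = P * U j + q * X" for j
  proof (induction j)
    case 0
    show ?case using U0 Ur by (intro exI[of _ 1]) simp
  next
    case (Suc j)
    obtain Xj where Xj: "Xj \<ge> 0" "Xj^2 = K * (U j)^2 + 1 - K" "U (r + j) = P * U j + q * Xj"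
      using Suc.IH by blast
    obtain Xs where Xs: "Xs \<ge> 0" "Xs^2 = K * (U (Suc j))^2 + 1 - K" using roots by blast
    obtain m where m: "U m = P * U (Suc j) + q * Xs" using fwd[OF Xs] by blast
    have "U (r + j) < U m" unfolding m Xj(3)
      by (rule psi_mono(2)[of K P q Xj Xs]) (use K2 P1 q0 Xj Xs Upos Umono[of j "Suc j"] in auto)
    then have "r + j < m" using Umono by simp
    then have le1: "U (Suc (r + j)) \<le> U m" using Umono' by simp
    obtain Xw where Xw: "Xw \<ge> 0" "Xw^2 = K * (U (Suc (r+j)))^2 + 1 - K" using roots by blast
    have Uw: "U (Suc (r+j)) \<ge> P + q" unfolding Ur[symmetric] using Umono' by simp
    note inv = psi_inv[OF K2 P1 q0 H Xw Uw]
    define U0 where "U0 = P * U (Suc (r+j)) - q * Xw"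
    define X0 where "X0 = P * Xw - K * q * U (Suc (r+j))"
    obtain y where y: "y \<ge> 0" "Xw = 2*y+1" using root_odd[of Xw k "tseq k (Suc (r+j))"] Xw unfolding U_def K_def by blast
    define t0 where "t0 = P * int (tseq k (Suc (r+j))) - q * y + a"
    have Ut0: "2 * t0 + 1 = U0" unfolding t0_def U0_def U_def y(2) using UbP kab P_def q_def by (simp add: algebra_simps)
    have t00: "t0 \<ge> 0" using inv(1) Ut0 U0_def by simp
    have "nat t0 \<in> tset k" unfolding mem_iff using inv(2,4) Ut0 t00 K_def U0_def X0_def
      by (metis int_nat_eq)
    then obtain n where n: "enumerate (tset k) n = nat t0" using enumerate_Ex[OF inf] by blast
    then have Un: "U n = U0" using t00 U_def tseq_def Ut0 by simp
    obtain Xn where Xn: "Xn \<ge> 0" "Xn^2 = K * (U n)^2 + 1 - K" using roots by blast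
    have XnX0: "Xn = X0"
    proof -
      have "Xn^2 = X0^2" using Xn(2) inv(4) Un U0_def X0_def by simp
      then show ?thesis using Xn(1) inv(2) X0_def by (simp add: power2_eq_iff_nonneg)
    qed
    have bk: "U (Suc (r+j)) = P * U n + q * Xn" using inv(3) Un XnX0 U0_def X0_def by simp
    have "j < n"
    proof (rule ccontr)
      assume "\<not> j < n"
      then have "n \<le> j" by simp
      then have "P * U n + q * Xn \<le> P * U j + q * Xj"
        by (intro psi_mono(1)[of K P q Xn Xj]) (use K2 P1 q0 Xj Xn Upos Umono' in auto)
      then have "U (Suc (r+j)) \<le> U (r + j)" using bk Xj(3) by simp
      then show False using Umono' by simp
    qed
    then have "Suc j \<le> n" by simp
    then have "P * U (Suc j) + q * Xs \<le> P * U n + q * Xn"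
      by (intro psi_mono(1)[of K P q Xs Xn]) (use K2 P1 q0 Xs Xn Upos Umono' in auto)
    then have "U m \<le> U (Suc (r+j))" using m bk by simp
    with le1 have "U (r + Suc j) = P * U (Suc j) + q * Xs" using m by simp
    then show ?case using Xs by blast
  qed
  show ?thesis
  proof (intro allI impI)
    fix n assume nr: "r \<le> n"
    define j where "j = n - r"
    have nj: "n = r + j" using nr j_def by simp
    obtain X where X: "X \<ge> 0" "X^2 = K * (U j)^2 + 1 - K" "U (r + j) = P * U j + q * X"
      using main by blast
    define x where "x = int (tseq k n)"
    define y where "y = int (tseq k (n - r))"
    have Un: "2*x+1 = P*(2*y+1) + q*X" using X(3) unfolding x_def y_def U_def nj by simp
    have V: "X^2 = K*(2*y+1)^2 + 1 - K" using X(2) unfolding y_def U_def j_def .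
    have e1: "4*(\<kappa> * (x + 2*x*y + y) - (x - y)^2) = -(((2*x+1) - P*(2*y+1))^2 - (P^2-1)*(2*y+1)^2) - 2*\<kappa>"
      unfolding P_def by (simp add: power2_eq_square algebra_simps)
    have e2: "((2*x+1) - P*(2*y+1))^2 = q^2*X^2" unfolding Un by (simp add: power2_eq_square)
    have e3: "((2*x+1) - P*(2*y+1))^2 - (P^2-1)*(2*y+1)^2 = q^2*(1-K)"
      unfolding e2 V H[symmetric] by (simp add: algebra_simps)
    have "4*(\<kappa> * (x + 2*x*y + y) - (x - y)^2) = q^2*(K-1) - 2*\<kappa>" using e1 e3 by (simp add: algebra_simps)
    also have "\<dots> = (P^2-1) - q^2 - 2*\<kappa>" using H by (simp add: algebra_simps)
    also have "\<dots> = 4*(b*a)" unfolding P_def q_def kab by (simp add: power2_eq_square algebra_simps)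
    finally have "\<kappa> * (x + 2*x*y + y) - (x - y)^2 = b*a" by simp
    then show "\<kappa> * (int (tseq k n) + 2 * int (tseq k n) * int (tseq k (n - r)) + int (tseq k (n - r)))
                  - (int (tseq k n) - int (tseq k (n - r)))^2 = int (tseq k r) * int (tseq k (r - 1))"
      unfolding x_def y_def a_def b_def .
  qed
qed
end
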